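(* Let $\Psi$ be an SP-expression in the $n\ge 1$ distinct variables $x_1,\dots,x_n$, let $\alpha$ be the SP-order on $X=\{x_1,\dots,x_n\}$ determined by $\Psi$, and let $\alpha^{*}$ be the SP-order determined by the dual expression $\Psi^{*}$. Define the quantitative entropy $H_q=\log_2|R(\alpha)|$, the positional entropy $H_p=\log_2|R(\alpha^{*})|$, and $H_{max}=\log_2(n!)$. Then $$H_p+H_q=H_{max},$$ equivalently $|R(\alpha)|\cdot|R(\alpha^{*})| = n!$.
   Context: All partial orders are finite. For posets $\alpha_1=(A_1,\sqsubseteq_1)$, $\alpha_2=(A_2,\sqsubseteq_2)$ with $A_1\cap A_2=\emptyset$, the series composition is $\alpha_1\otimes\alpha_2=(A_1\cup A_2,\ \sqsubseteq_1\cup\sqsubseteq_2\cup(A_1\times A_2))$ (every element of $\alpha_1$ lies below every element of $\alpha_2$) and the parallel composition is $\alpha_1\parallel\alpha_2=(A_1\cup A_2,\ \sqsubseteq_1\cup\sqsubseteq_2)$. An SP-expression is built from variables $x_i$ using the binary symbols $\otimes$ and $\parallel$ (with brackets), each variable occurring at most once. The SP-order determined by an SP-expression $\Psi$ is obtained by interpreting each variable $x_i$ as the one-element poset on $\{x_i\}$, each $\otimes$ as series composition and each $\parallel$ as parallel composition, evaluated according to the bracketing; its underlying set is the set of variables of $\Psi$. The dual expression $\Psi^{*}$ is obtained from $\Psi$ by interchanging every $\otimes$ with $\parallel$ and vice versa (e.g. the dual of $((x_1\otimes x_2)\parallel x_3)\otimes x_4$ is $((x_1\parallel x_2)\otimes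 x_3)\parallel x_4$). For a poset $\alpha=(X,\sqsubseteq)$ with $|X|=n$, its state space $R(\alpha)$ is the set of root states, i.e. bijections $l:X\to\{1,\dots,n\}$ that are increasing ($x\sqsubseteq y$, $x\neq y$ implies $l(x)<l(y)$); these are the topological sorts (linear extensions) of $\alpha$ up to isomorphism of labelings, the elements $x_1,\dots,x_n$ being distinguishable. In particular for the discrete (antichain) order $\Delta_n$ one has $|R(\Delta_n)|=n!$. *)

theory Defs
  imports Complex_Main "HOL-Library.FuncSet"
begin

datatype 'a spexpr = SPVar 'a | SPSer "'a spexpr" "'a spexpr" | SPPar "'a spexpr" "'a spexpr"

fun sp_vars :: "'a spexpr \<Rightarrow> 'a set" where
  "sp_vars (SPVar x) = {x}"
| "sp_vars (SPSer a b) = sp_vars a \<union> sp_vars b"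
| "sp_vars (SPPar a b) = sp_vars a \<union> sp_vars b"

fun sp_wf :: "'a spexpr \<Rightarrow> bool" where
  "sp_wf (SPVar x) = True"
| "sp_wf (SPSer a b) = (sp_wf a \<and> sp_wf b \<and> sp_vars a \<inter> sp_vars b = {})"
| "sp_wf (SPPar a b) = (sp_wf a \<and> sp_wf b \<and> sp_vars a \<inter> sp_vars b = {})"

fun sp_dual :: "'a spexpr \<Rightarrow> 'a spexpr" where
  "sp_dual (SPVar x) = SPVar x"
| "sp_dual (SPSer a b) = SPPar (sp_dual a) (sp_dual b)"
| "sp_dual (SPPar a b) = SPSer (sp_dual a) (sp_dual b)"

fun sp_order :: "'a spexpr \<Rightarrow> 'a rel" where
  "sp_order (SPVar x) = {(x, x)}"
| "sp_order (SPSer a b) = sp_order a \<union> sp_order b \<union> (sp_vars a \<times> sp_vars b)"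
| "sp_order (SPPar a b) = sp_order a \<union> sp_order b"

text \<open>State space R of a poset (X, r): increasing bijections X \<rightarrow> {1..|X|}
  (extensional outside X so that distinct labelings are distinct functions).\<close>
definition root_states :: "'a set \<Rightarrow> 'a rel \<Rightarrow> ('a \<Rightarrow> nat) set" where
  "root_states X r = {l \<in> X \<rightarrow>\<^sub>E {1..card X}. bij_betw l X {1..card X} \<and>
       (\<forall>x y. (x, y) \<in> r \<and> x \<noteq> y \<longrightarrow> l x < l y)}"

end

theory Submission
  imports Defs "HOL-Library.Infinite_Set"
begin

definition exts :: "nat set \<Rightarrow> 'a set \<Rightarrow> 'a rel \<Rightarrow> ('a \<Rightarrow> nat) set" where
  "exts S X r = {l \<in> X \<rightarrow>\<^sub>E S. bij_betw l X S \<and>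
       (\<forall>x y. (x, y) \<in> r \<and> x \<noteq> y \<longrightarrow> l x < l y)}"

lemma finite_exts: "finite X \<Longrightarrow> finite S \<Longrightarrow> finite (exts S X r)"
  unfolding exts_def by (rule finite_subset[OF _ finite_PiE[of X "\<lambda>_. S"]]) auto

lemma exts_map:
  assumes rX: "r \<subseteq> X \<times> X" and bij: "bij_betw h S T" and mono: "\<forall>i\<in>S. \<forall>j\<in>S. i < j \<longrightarrow> h i < h j"
  shows "(\<lambda>l. restrict (h \<circ> l) X) ` exts S X r \<subseteq> exts T X r"
    "inj_on (\<lambda>l. restrict (h \<circ> l) X) (exts S X r)"
proof -
  show "(\<lambda>l. restrict (h \<circ> l) X) ` exts S X r \<subseteq> exts T X r"
  proof
    fix l' assume "l' \<in> (\<lambda>l. restrict (h \<circ> l) X) ` exts S X r"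
    then obtain l where l: "l \<in> exts S X r" and l': "l' = restrict (h \<circ> l) X" by auto
    have lb: "bij_betw l X S" and lP: "l \<in> X \<rightarrow>\<^sub>E S"
      and lm: "\<forall>x y. (x, y) \<in> r \<and> x \<noteq> y \<longrightarrow> l x < l y" using l by (auto simp: exts_def)
    have hl: "bij_betw (h \<circ> l) X T" using bij_betw_trans[OF lb bij] .
    hence b: "bij_betw l' X T" by (simp add: l')
    have "\<forall>x\<in>X. (h \<circ> l) x \<in> T" using bij_betwE[OF hl] by blast
    hence "l' \<in> X \<rightarrow>\<^sub>E T" by (auto simp: l')
    moreover have "\<forall>x y. (x, y) \<in> r \<and> x \<noteq> y \<longrightarrow> l' x < l' y"
    proof (intro allI impI)
      fix x y assume xy: "(x, y) \<in> r \<and> x \<noteq> y"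
      have lt: "l x < l y" using lm xy by blast
      have "x \<in> X \<and> y \<in> X" using rX xy by auto
      then show "l' x < l' y" using mono lP lt unfolding l' by auto
    qed
    ultimately show "l' \<in> exts T X r" using b by (simp add: exts_def)
  qed
  show "inj_on (\<lambda>l. restrict (h \<circ> l) X) (exts S X r)"
  proof (rule inj_onI)
    fix l1 l2 assume a: "l1 \<in> exts S X r" "l2 \<in> exts S X r"
      and e: "restrict (h \<circ> l1) X = restrict (h \<circ> l2) X"
    have "l1 x = l2 x" for x
    proof (cases "x \<in> X")
      case True
      have "h (l1 x) = h (l2 x)" using fun_cong[OF e, of x] True by simp
      moreover have "l1 x \<in> S" "l2 x \<in> S" using a True by (auto simp: exts_def)
      ultimately show ?thesis using bij unfolding bij_betw_def inj_on_def by blast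
    next
      case False
      have "l1 \<in> X \<rightarrow>\<^sub>E S" "l2 \<in> X \<rightarrow>\<^sub>E S" using a by (simp_all add: exts_def)
      then show ?thesis using False PiE_arb by metis
    qed
    then show "l1 = l2" by auto
  qed
qed

lemma exts_card_lessThan:
  assumes X: "finite X" and rX: "r \<subseteq> X \<times> X" and S: "finite S"
  shows "card (exts S X r) = card (exts {..<card S} X r)"
proof -
  let ?k = "card S"
  let ?h = "enumerate S"
  have hb: "bij_betw ?h {..<?k} S" using finite_bij_enumerate[OF S] .
  have hm: "\<forall>i\<in>{..<?k}. \<forall>j\<in>{..<?k}. i < j \<longrightarrow> ?h i < ?h j"
    using finite_enumerate_mono[OF _ S] by auto
  let ?g = "the_inv_into {..<?k} ?h"
  have gb: "bij_betw ?g S {..<?k}" using bij_betw_the_inv_into[OF hb] .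
  have gm: "\<forall>i\<in>S. \<forall>j\<in>S. i < j \<longrightarrow> ?g i < ?g j"
  proof (intro ballI impI)
    fix s t assume st: "s \<in> S" "t \<in> S" "s < t"
    have e1: "?h (?g s) = s" "?h (?g t) = t" using f_the_inv_into_f_bij_betw[OF hb] st by auto
    have in1: "?g s \<in> {..<?k}" "?g t \<in> {..<?k}" using gb st bij_betwE by blast+
    show "?g s < ?g t"
    proof (rule ccontr)
      assume "\<not> ?g s < ?g t"
      hence "?g t < ?g s \<or> ?g t = ?g s" by auto
      thus False using hm in1 e1 st(3) by (metis less_asym less_irrefl)
    qed
  qed
  have fin1: "finite (exts S X r)" "finite (exts {..<?k} X r)" using finite_exts X S by auto
  have "card (exts {..<?k} X r) \<le> card (exts S X r)"
    using card_inj_on_le[OF exts_map(2)[OF rX hb hm] exts_map(1)[OF rX hb hm] fin1(1)] .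
  moreover have "card (exts S X r) \<le> card (exts {..<?k} X r)"
    using card_inj_on_le[OF exts_map(2)[OF rX gb gm] exts_map(1)[OF rX gb gm] fin1(2)] .
  ultimately show ?thesis by simp
qed

lemma exts_card_eq:
  assumes "finite X" "r \<subseteq> X \<times> X" "finite S" "finite T" "card S = card T"
  shows "card (exts S X r) = card (exts T X r)"
  using exts_card_lessThan[OF assms(1,2,3)] exts_card_lessThan[OF assms(1,2,4)] assms(5) by simp

definition split_target :: "nat set \<Rightarrow> 'a set \<Rightarrow> 'a set \<Rightarrow> 'a rel \<Rightarrow> 'a rel \<Rightarrow> 'a rel
   \<Rightarrow> (nat set \<times> ('a \<Rightarrow> nat) \<times> ('a \<Rightarrow> nat)) set" where
  "split_target S A B rA rB C = (SIGMA T:{T. T \<subseteq> S \<and> card T = card A}.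
      {(la, lb). la \<in> exts T A rA \<and> lb \<in> exts (S - T) B rB \<and> (\<forall>(x,y)\<in>C. la x < lb y)})"

lemma exts_split:
  assumes AB: "A \<inter> B = {}" and rA: "rA \<subseteq> A \<times> A" and rB: "rB \<subseteq> B \<times> B"
    and C: "C \<subseteq> A \<times> B"
  shows "bij_betw (\<lambda>l. (l ` A, restrict l A, restrict l B)) (exts S (A \<union> B) (rA \<union> rB \<union> C))
     (split_target S A B rA rB C)"
proof (rule bij_betw_byWitness[where f' = "\<lambda>(T, la, lb). (\<lambda>x. if x \<in> A then la x else lb x)"])
  show "\<forall>l\<in>exts S (A \<union> B) (rA \<union> rB \<union> C).
      (\<lambda>(T, la, lb). (\<lambda>x. if x \<in> A then la x else lb x)) (l ` A, restrict l A, restrict l B) = l"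
  proof
    fix l assume l: "l \<in> exts S (A \<union> B) (rA \<union> rB \<union> C)"
    hence lP: "l \<in> (A \<union> B) \<rightarrow>\<^sub>E S" by (simp add: exts_def)
    show "(\<lambda>(T, la, lb). (\<lambda>x. if x \<in> A then la x else lb x)) (l ` A, restrict l A, restrict l B) = l"
    proof (rule ext)
      fix x
      show "(\<lambda>(T, la, lb). (\<lambda>x. if x \<in> A then la x else lb x)) (l ` A, restrict l A, restrict l B) x = l x"
        using PiE_arb[OF lP, of x] by auto
    qed
  qed
  show "\<forall>a'\<in>split_target S A B rA rB C.
      (\<lambda>l. (l ` A, restrict l A, restrict l B)) ((\<lambda>(T, la, lb). (\<lambda>x. if x \<in> A then la x else lb x)) a') = a'"
  proof
    fix a' assume a': "a' \<in> split_target S A B rA rB C"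
    obtain T la lb where a'e: "a' = (T, la, lb)" by (cases a') auto
    have la: "la \<in> exts T A rA" and lb: "lb \<in> exts (S - T) B rB"
      using a' unfolding a'e split_target_def by auto
    have laP: "la \<in> A \<rightarrow>\<^sub>E T" and lbP: "lb \<in> B \<rightarrow>\<^sub>E (S - T)"
      and lab: "bij_betw la A T" using la lb by (auto simp: exts_def)
    let ?m = "\<lambda>x. if x \<in> A then la x else lb x"
    have 1: "?m ` A = T" using bij_betw_imp_surj_on[OF lab] by auto
    have 2: "restrict ?m A = la"
    proof (rule ext)
      fix x show "restrict ?m A x = la x" using PiE_arb[OF laP, of x] by auto
    qed
    have 3: "restrict ?m B = lb"
    proof (rule ext)
      fix x show "restrict ?m B x = lb x" using PiE_arb[OF lbP, of x] AB by auto
    qed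
    show "(\<lambda>l. (l ` A, restrict l A, restrict l B)) ((\<lambda>(T, la, lb). (\<lambda>x. if x \<in> A then la x else lb x)) a') = a'"
      unfolding a'e using 1 2 3 by simp
  qed
  show "(\<lambda>l. (l ` A, restrict l A, restrict l B)) ` exts S (A \<union> B) (rA \<union> rB \<union> C)
      \<subseteq> split_target S A B rA rB C"
  proof
    fix z assume "z \<in> (\<lambda>l. (l ` A, restrict l A, restrict l B)) ` exts S (A \<union> B) (rA \<union> rB \<union> C)"
    then obtain l where l: "l \<in> exts S (A \<union> B) (rA \<union> rB \<union> C)"
      and z: "z = (l ` A, restrict l A, restrict l B)" by auto
    have lb: "bij_betw l (A \<union> B) S" and lm: "\<forall>x y. (x, y) \<in> rA \<union> rB \<union> C \<and> x \<noteq> y \<longrightarrow> l x < l y"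
      using l by (auto simp: exts_def)
    have inj: "inj_on l (A \<union> B)" and im: "l ` (A \<union> B) = S" using lb by (auto simp: bij_betw_def)
    have injA: "inj_on l A" and injB: "inj_on l B" using inj by (auto intro: inj_on_subset)
    have disj: "l ` A \<inter> l ` B = {}" using inj AB unfolding inj_on_def by blast
    have TS: "l ` A \<subseteq> S" using im by auto
    have SB: "S - l ` A = l ` B" using im disj by auto
    have e1: "restrict l A \<in> exts (l ` A) A rA"
    proof -
      have "bij_betw (restrict l A) A (l ` A)" using injA by (simp add: inj_on_imp_bij_betw)
      moreover have "\<forall>x y. (x, y) \<in> rA \<and> x \<noteq> y \<longrightarrow> restrict l A x < restrict l A y"
        using lm rA by auto
      ultimately show ?thesis unfolding exts_def by auto
    qed
    have e2: "restrict l B \<in> exts (S - l ` A) B rB"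
    proof -
      have "bij_betw (restrict l B) B (l ` B)" using injB by (simp add: inj_on_imp_bij_betw)
      moreover have "\<forall>x y. (x, y) \<in> rB \<and> x \<noteq> y \<longrightarrow> restrict l B x < restrict l B y"
        using lm rB by auto
      ultimately show ?thesis unfolding exts_def SB by auto
    qed
    have e3: "\<forall>(x,y)\<in>C. restrict l A x < restrict l B y"
    proof (intro ballI, clarify)
      fix x y assume xy: "(x, y) \<in> C"
      hence "x \<in> A" "y \<in> B" "x \<noteq> y" using C AB by auto
      thus "restrict l A x < restrict l B y" using lm xy by auto
    qed
    have "card (l ` A) = card A" using card_image[OF injA] .
    then show "z \<in> split_target S A B rA rB C"
      unfolding z split_target_def using TS e1 e2 e3 by auto
  qed
  show "(\<lambda>(T, la, lb). (\<lambda>x. if x \<in> A then la x else lb x)) ` split_target S A B rA rB C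
      \<subseteq> exts S (A \<union> B) (rA \<union> rB \<union> C)"
  proof
    fix z assume "z \<in> (\<lambda>(T, la, lb). (\<lambda>x. if x \<in> A then la x else lb x)) ` split_target S A B rA rB C"
    then obtain T la lb where a': "(T, la, lb) \<in> split_target S A B rA rB C"
      and z: "z = (\<lambda>x. if x \<in> A then la x else lb x)" by auto
    have TS: "T \<subseteq> S" and la: "la \<in> exts T A rA" and lb: "lb \<in> exts (S - T) B rB"
      and cr: "\<forall>(x,y)\<in>C. la x < lb y"
      using a' unfolding split_target_def by auto
    have laP: "la \<in> A \<rightarrow>\<^sub>E T" and lbP: "lb \<in> B \<rightarrow>\<^sub>E (S - T)"
      and lab: "bij_betw la A T" and lbb: "bij_betw lb B (S - T)"
      and lam: "\<forall>x y. (x, y) \<in> rA \<and> x \<noteq> y \<longrightarrow> la x < la y"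
      and lbm: "\<forall>x y. (x, y) \<in> rB \<and> x \<noteq> y \<longrightarrow> lb x < lb y"
      using la lb by (auto simp: exts_def)
    have bA: "bij_betw z A T" using lab by (simp add: z cong: bij_betw_cong)
    have bB: "bij_betw z B (S - T)"
    proof -
      have "\<And>x. x \<in> B \<Longrightarrow> lb x = z x" using AB z by auto
      thus ?thesis using lbb bij_betw_cong by metis
    qed
    have "bij_betw z (A \<union> B) (T \<union> (S - T))" by (rule bij_betw_combine[OF bA bB]) auto
    moreover have "T \<union> (S - T) = S" using TS by auto
    ultimately have bz: "bij_betw z (A \<union> B) S" by simp
    have zP: "z \<in> (A \<union> B) \<rightarrow>\<^sub>E S"
    proof -
      have "\<forall>x\<in>A \<union> B. z x \<in> S" using bz bij_betwE by blast
      moreover have "\<forall>x. x \<notin> A \<union> B \<longrightarrow> z x = undefined" using PiE_arb[OF lbP] z by auto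
      ultimately show ?thesis by (auto simp: PiE_def extensional_def)
    qed
    have zm: "\<forall>x y. (x, y) \<in> rA \<union> rB \<union> C \<and> x \<noteq> y \<longrightarrow> z x < z y"
    proof (intro allI impI)
      fix x y assume xy: "(x, y) \<in> rA \<union> rB \<union> C \<and> x \<noteq> y"
      show "z x < z y"
      proof -
        { assume "(x, y) \<in> rA" hence ?thesis using rA lam xy z by auto }
        moreover { assume "(x, y) \<in> rB" hence ?thesis using rB lbm xy z AB by auto }
        moreover { assume "(x, y) \<in> C" hence ?thesis using C cr z AB by auto }
        ultimately show ?thesis using xy by blast
      qed
    qed
    show "z \<in> exts S (A \<union> B) (rA \<union> rB \<union> C)" unfolding exts_def using zP bz zm by auto
  qed
qed

lemma card_split_target:
  "card (exts S (A \<union> B) (rA \<union> rB \<union> C)) = card (split_target S A B rA rB C)"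
  if "A \<inter> B = {}" "rA \<subseteq> A \<times> A" "rB \<subseteq> B \<times> B" "C \<subseteq> A \<times> B"
  using bij_betw_same_card[OF exts_split[OF that]] .

lemma card_par:
  assumes A: "finite A" and B: "finite B" and AB: "A \<inter> B = {}"
    and rA: "rA \<subseteq> A \<times> A" and rB: "rB \<subseteq> B \<times> B" and S: "finite S"
    and cS: "card S = card A + card B"
  shows "card (exts S (A \<union> B) (rA \<union> rB)) =
    (card S choose card A) * (card (exts {..<card A} A rA) * card (exts {..<card B} B rB))"
proof -
  let ?F = "{T. T \<subseteq> S \<and> card T = card A}"
  let ?c = "card (exts {..<card A} A rA) * card (exts {..<card B} B rB)"
  have "card (exts S (A \<union> B) (rA \<union> rB)) = card (split_target S A B rA rB {})"
    using card_split_target[OF AB rA rB, of "{}" S] by simp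
  also have "split_target S A B rA rB {} = (SIGMA T:?F. exts T A rA \<times> exts (S - T) B rB)"
    unfolding split_target_def by auto
  also have "card \<dots> = (\<Sum>T\<in>?F. card (exts T A rA \<times> exts (S - T) B rB))"
  proof (rule card_SigmaI)
    show "finite ?F" using S by simp
    show "\<forall>T\<in>?F. finite (exts T A rA \<times> exts (S - T) B rB)"
    proof
      fix T assume "T \<in> ?F"
      hence "finite T" using S finite_subset by blast
      thus "finite (exts T A rA \<times> exts (S - T) B rB)" using S A B finite_exts by blast
    qed
  qed
  also have "\<dots> = (\<Sum>T\<in>?F. ?c)"
  proof (rule sum.cong)
    fix T assume T: "T \<in> ?F"
    hence fT: "finite T" using S finite_subset by blast
    have "card (S - T) = card B" using T cS S by (simp add: card_Diff_subset fT)
    hence "card (exts (S - T) B rB) = card (exts {..<card B} B rB)"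
      using exts_card_eq[OF B rB] S by auto
    moreover have "card (exts T A rA) = card (exts {..<card A} A rA)"
      using exts_card_eq[OF A rA fT] T by auto
    ultimately show "card (exts T A rA \<times> exts (S - T) B rB) = ?c"
      by (simp add: card_cartesian_product)
  qed simp
  also have "\<dots> = card ?F * ?c" by simp
  also have "card ?F = card S choose card A" using n_subsets[OF S] .
  finally show ?thesis .
qed

lemma down_closed:
  assumes T: "T \<subseteq> {..<n::nat}" and lt: "\<forall>t\<in>T. \<forall>s\<in>{..<n} - T. t < s"
  shows "T = {..<card T}"
proof
  have fT: "finite T" using T finite_subset by blast
  show "T \<subseteq> {..<card T}"
  proof
    fix x assume x: "x \<in> T"
    have "{..x} \<subseteq> T"
    proof
      fix y assume "y \<in> {..x}"
      hence "y \<le> x" by simp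
      show "y \<in> T"
      proof (rule ccontr)
        assume "y \<notin> T"
        moreover have "y < n" using \<open>y \<le> x\<close> x T by auto
        ultimately have "x < y" using lt x by auto
        thus False using \<open>y \<le> x\<close> by simp
      qed
    qed
    hence "card {..x} \<le> card T" using fT card_mono by blast
    thus "x \<in> {..<card T}" by simp
  qed
  show "{..<card T} \<subseteq> T"
  proof
    fix x assume x: "x \<in> {..<card T}"
    show "x \<in> T"
    proof (rule ccontr)
      assume nx: "x \<notin> T"
      have "card T \<le> n" using T card_mono[OF _ T] by simp
      hence "x < n" using x by simp
      hence "\<forall>t\<in>T. t < x" using lt nx by auto
      hence "T \<subseteq> {..<x}" by auto
      hence "card T \<le> x" using card_mono[of "{..<x}" T] by simp
      thus False using x by simp
    qed
  qed
qed

lemma card_ser: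
  assumes A: "finite A" and B: "finite B" and AB: "A \<inter> B = {}" and An: "A \<noteq> {}" and Bn: "B \<noteq> {}"
    and rA: "rA \<subseteq> A \<times> A" and rB: "rB \<subseteq> B \<times> B"
  shows "card (exts {..<card A + card B} (A \<union> B) (rA \<union> rB \<union> A \<times> B)) =
    card (exts {..<card A} A rA) * card (exts {..<card B} B rB)"
proof -
  let ?a = "card A" and ?b = "card B"
  let ?S = "{..<?a + ?b}"
  have "card (exts ?S (A \<union> B) (rA \<union> rB \<union> A \<times> B)) = card (split_target ?S A B rA rB (A \<times> B))"
    using card_split_target[OF AB rA rB] by simp
  also have "split_target ?S A B rA rB (A \<times> B) = {{..<?a}} \<times> (exts {..<?a} A rA \<times> exts (?S - {..<?a}) B rB)"
  proof (rule set_eqI)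
    fix z :: "nat set \<times> ('a \<Rightarrow> nat) \<times> ('a \<Rightarrow> nat)"
    obtain T la lb where z: "z = (T, la, lb)" by (cases z) auto
    show "z \<in> split_target ?S A B rA rB (A \<times> B) \<longleftrightarrow> z \<in> {{..<?a}} \<times> (exts {..<?a} A rA \<times> exts (?S - {..<?a}) B rB)"
    proof
      assume "z \<in> split_target ?S A B rA rB (A \<times> B)"
      hence TS: "T \<subseteq> ?S" and cT: "card T = ?a" and la: "la \<in> exts T A rA"
        and lb: "lb \<in> exts (?S - T) B rB" and cr: "\<forall>x\<in>A. \<forall>y\<in>B. la x < lb y"
        unfolding z split_target_def by auto
      have lab: "bij_betw la A T" and lbb: "bij_betw lb B (?S - T)" using la lb by (auto simp: exts_def)
      have "\<forall>t\<in>T. \<forall>s\<in>?S - T. t < s"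
      proof (intro ballI)
        fix t s assume t: "t \<in> T" and s: "s \<in> ?S - T"
        obtain x where "x \<in> A" "t = la x" using t bij_betw_imp_surj_on[OF lab] by blast
        moreover obtain y where "y \<in> B" "s = lb y" using s bij_betw_imp_surj_on[OF lbb] by blast
        ultimately show "t < s" using cr by auto
      qed
      hence "T = {..<card T}" using down_closed[OF TS] by blast
      hence "T = {..<?a}" using cT by simp
      thus "z \<in> {{..<?a}} \<times> (exts {..<?a} A rA \<times> exts (?S - {..<?a}) B rB)"
        using la lb z by simp
    next
      assume "z \<in> {{..<?a}} \<times> (exts {..<?a} A rA \<times> exts (?S - {..<?a}) B rB)"
      hence T: "T = {..<?a}" and la: "la \<in> exts {..<?a} A rA" and lb: "lb \<in> exts (?S - {..<?a}) B rB"
        using z by auto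
      have "\<forall>x\<in>A. la x < ?a" using la by (auto simp: exts_def)
      moreover have "\<forall>y\<in>B. ?a \<le> lb y" using lb by (force simp: exts_def)
      ultimately have "\<forall>(x,y)\<in>A \<times> B. la x < lb y" by fastforce
      thus "z \<in> split_target ?S A B rA rB (A \<times> B)"
        unfolding z split_target_def using T la lb by auto
    qed
  qed
  also have "card \<dots> = card (exts {..<?a} A rA) * card (exts (?S - {..<?a}) B rB)"
    by (simp add: card_cartesian_product)
  also have "card (exts (?S - {..<?a}) B rB) = card (exts {..<?b} B rB)"
    using exts_card_eq[OF B rB] by simp
  finally show ?thesis .
qed

lemma sp_finite: "finite (sp_vars e)" by (induct e) auto
lemma sp_ne: "sp_vars e \<noteq> {}" by (induct e) auto
lemma sp_rel: "sp_order e \<subseteq> sp_vars e \<times> sp_vars e" by (induct e) auto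
lemma dual_vars: "sp_vars (sp_dual e) = sp_vars e" by (induct e) auto
lemma dual_wf: "sp_wf (sp_dual e) = sp_wf e" by (induct e) (auto simp: dual_vars)

definition N :: "'a spexpr \<Rightarrow> nat" where
  "N e = card (exts {..<card (sp_vars e)} (sp_vars e) (sp_order e))"

lemma N_Var: "N (SPVar x) = 1"
proof -
  have "exts {0} {x} {(x,x)} = {x} \<rightarrow>\<^sub>E {0}"
    by (auto simp: exts_def bij_betw_def PiE_iff)
  moreover have "{..<Suc 0} = {0::nat}" by auto
  ultimately show ?thesis by (simp add: N_def card_PiE)
qed

lemma N_Ser: "sp_wf (SPSer a b) \<Longrightarrow> N (SPSer a b) = N a * N b"
  unfolding N_def using card_ser[OF sp_finite sp_finite _ sp_ne sp_ne sp_rel sp_rel, of a b]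
  by (simp add: card_Un_disjoint[OF sp_finite sp_finite])

lemma N_Par: "sp_wf (SPPar a b) \<Longrightarrow>
   N (SPPar a b) = (card (sp_vars a) + card (sp_vars b) choose card (sp_vars a)) * (N a * N b)"
  unfolding N_def using card_par[OF sp_finite sp_finite _ sp_rel sp_rel, of a b "{..<card (sp_vars a) + card (sp_vars b)}"]
  by (simp add: card_Un_disjoint[OF sp_finite sp_finite])

lemma N_dual: "sp_wf e \<Longrightarrow> N e * N (sp_dual e) = fact (card (sp_vars e))"
proof (induct e)
  case (SPVar x)
  then show ?case by (simp add: N_Var)
next
  case (SPSer a b)
  let ?a = "card (sp_vars a)" and ?b = "card (sp_vars b)"
  have w: "sp_wf a" "sp_wf b" "sp_vars a \<inter> sp_vars b = {}" using SPSer.prems by auto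
  have wd: "sp_wf (SPPar (sp_dual a) (sp_dual b))" using w by (simp add: dual_wf dual_vars)
  have c: "card (sp_vars (SPSer a b)) = ?a + ?b" using w by (simp add: card_Un_disjoint[OF sp_finite sp_finite])
  have "N (SPSer a b) * N (sp_dual (SPSer a b)) = (?a + ?b choose ?a) * ((N a * N (sp_dual a)) * (N b * N (sp_dual b)))"
    using N_Ser[OF SPSer.prems] N_Par[OF wd] by (simp add: dual_vars algebra_simps)
  also have "\<dots> = fact ?a * fact ?b * (?a + ?b choose ?a)" using SPSer w by simp
  also have "\<dots> = fact (?a + ?b)" using binomial_fact_lemma[of ?a "?a + ?b"] by simp
  finally show ?case using c by simp
next
  case (SPPar a b)
  let ?a = "card (sp_vars a)" and ?b = "card (sp_vars b)"
  have w: "sp_wf a" "sp_wf b" "sp_vars a \<inter> sp_vars b = {}" using SPPar.prems by auto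
  have wd: "sp_wf (SPSer (sp_dual a) (sp_dual b))" using w by (simp add: dual_wf dual_vars)
  have c: "card (sp_vars (SPPar a b)) = ?a + ?b" using w by (simp add: card_Un_disjoint[OF sp_finite sp_finite])
  have "N (SPPar a b) * N (sp_dual (SPPar a b)) = (?a + ?b choose ?a) * ((N a * N (sp_dual a)) * (N b * N (sp_dual b)))"
    using N_Par[OF SPPar.prems] N_Ser[OF wd] by (simp add: dual_vars algebra_simps)
  also have "\<dots> = fact ?a * fact ?b * (?a + ?b choose ?a)" using SPPar w by simp
  also have "\<dots> = fact (?a + ?b)" using binomial_fact_lemma[of ?a "?a + ?b"] by simp
  finally show ?case using c by simp
qed

lemma root_N: "card (root_states (sp_vars e) (sp_order e)) = N e"
  unfolding N_def root_states_def exts_def[symmetric]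
  by (rule exts_card_eq[OF sp_finite sp_rel]) auto

theorem mainTheorem1:
  fixes \<Psi> :: "'a spexpr"
  assumes "sp_wf \<Psi>"
  defines "n \<equiv> card (sp_vars \<Psi>)"
  defines "Hq \<equiv> log 2 (real (card (root_states (sp_vars \<Psi>) (sp_order \<Psi>))))"
  defines "Hp \<equiv> log 2 (real (card (root_states (sp_vars (sp_dual \<Psi>)) (sp_order (sp_dual \<Psi>)))))"
  defines "Hmax \<equiv> log 2 (real (fact n))"
  shows "Hp + Hq = Hmax \<and>
         card (root_states (sp_vars \<Psi>) (sp_order \<Psi>)) *
         card (root_states (sp_vars (sp_dual \<Psi>)) (sp_order (sp_dual \<Psi>))) = fact n"
proof -
  have P: "card (root_states (sp_vars \<Psi>) (sp_order \<Psi>)) *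
         card (root_states (sp_vars (sp_dual \<Psi>)) (sp_order (sp_dual \<Psi>))) = fact n"
    unfolding root_N n_def using N_dual[OF assms(1)] by simp
  have p1: "N \<Psi> > 0" and p2: "N (sp_dual \<Psi>) > 0"
    using N_dual[OF assms(1)] by (metis fact_gt_zero gr0I mult_eq_0_iff)+
  have "Hp + Hq = log 2 (real (N (sp_dual \<Psi>)) * real (N \<Psi>))"
    unfolding Hp_def Hq_def root_N using p1 p2 by (simp add: log_mult)
  also have "\<dots> = Hmax" unfolding Hmax_def
    using N_dual[OF assms(1)] unfolding n_def by (metis mult.commute of_nat_fact of_nat_mult)
  finally show ?thesis using P by simp
qed

end
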